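(* Let $\beta>0$ and let $L:(0,\infty)\to(0,\infty)$ be slowly varying at $\infty$ with $n\mapsto L(e^n)$ ultimately monotonically increasing. For all sufficiently large $y$ define $\tilde g_1^*(y)=\frac{1}{2\beta}\log L(e^{2n-2})$, where $n\ge2$ is the integer with $n-1+\frac{1}{2\beta}\log L(e^{2n-2})\le y<n+\frac{1}{2\beta}\log L(e^{2n})$. Then for any $A>0$, \[ \tilde g_1^*(\log Ax)-\tilde g_1^*(\log x)\to0\qquad\text{as } x\to\infty. \] *)

theory Defs
  imports "HOL-Analysis.Analysis"
begin

definition slowly_varying :: "(real \<Rightarrow> real) \<Rightarrow> bool" where
  "slowly_varying L \<longleftrightarrow>
     (\<forall>x>0. L x > 0) \<and>
     L \<in> borel_measurable (restrict_space borel {0<..}) \<and>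
     (\<forall>lam>0. ((\<lambda>x. L (lam * x) / L x) \<longlongrightarrow> 1) at_top)"

text \<open>The function tilde g_1^*: for y, take the integer n \<ge> 2 with
  n - 1 + log L(e^(2n-2))/(2 beta) \<le> y < n + log L(e^(2n))/(2 beta),
  and return log L(e^(2n-2))/(2 beta). (Only meaningful for large y, where n is unique.)\<close>
definition gstar :: "real \<Rightarrow> (real \<Rightarrow> real) \<Rightarrow> real \<Rightarrow> real" where
  "gstar \<beta> L y =
     (let n = (THE n::nat. 2 \<le> n \<and>
                 real n - 1 + ln (L (exp (2 * real n - 2))) / (2 * \<beta>) \<le> y \<and>
                 y < real n + ln (L (exp (2 * real n))) / (2 * \<beta>))
      in ln (L (exp (2 * real n - 2))) / (2 * \<beta>))"

end

theory Submission
  imports Defs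
begin

theorem lemmaA2:
  fixes \<beta> A :: real and L :: "real \<Rightarrow> real"
  assumes "\<beta> > 0"
    and "slowly_varying L"
    and "\<forall>\<^sub>F n in sequentially. L (exp (real n)) \<le> L (exp (real (Suc n)))"
    and "A > 0"
  shows "((\<lambda>x. gstar \<beta> L (ln (A * x)) - gstar \<beta> L (ln x)) \<longlongrightarrow> 0) at_top"
proof -
  have Lpos: "\<And>x. x > 0 \<Longrightarrow> L x > 0" using assms(2) unfolding slowly_varying_def by blast
  have sv: "\<And>lam. lam > 0 \<Longrightarrow> ((\<lambda>x. L (lam * x) / L x) \<longlongrightarrow> 1) at_top"
    using assms(2) unfolding slowly_varying_def by blast
  define h where "h = (\<lambda>n::nat. ln (L (exp (2 * real n))) / (2 * \<beta>))"
  define P where "P = (\<lambda>y n. 2 \<le> n \<and> real n - 1 + h (n-1) \<le> y \<and> y < real n + h n)"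
  have gstar_eq: "gstar \<beta> L y = h (n-1)" if Pn: "P y n" and un: "\<And>m. P y m \<Longrightarrow> m = n" for y n
  proof -
    have Q: "(2 \<le> m \<and> real m - 1 + ln (L (exp (2 * real m - 2))) / (2 * \<beta>) \<le> y \<and>
                 y < real m + ln (L (exp (2 * real m))) / (2 * \<beta>)) = P y m" for m
    proof (cases "2 \<le> m")
      case True
      then have "2 * real m - 2 = 2 * real (m - 1)" by (simp add: of_nat_diff)
      then show ?thesis using True by (simp add: P_def h_def)
    next
      case False then show ?thesis by (simp add: P_def)
    qed
    have QQ: "(\<lambda>m::nat. 2 \<le> m \<and> real m - 1 + ln (L (exp (2 * real m - 2))) / (2 * \<beta>) \<le> y \<and>
                 y < real m + ln (L (exp (2 * real m))) / (2 * \<beta>)) = P y" 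
      by (rule ext) (rule Q)
    have T: "(THE m. P y m) = n" using Pn un by (rule the_equality[where P="P y"])
    have n2: "2 \<le> n" using Pn by (simp add: P_def)
    then have eq: "2 * real n - 2 = 2 * real (n - 1)" by (simp add: of_nat_diff)
    show ?thesis unfolding gstar_def Let_def QQ T h_def by (simp only: eq)
  qed
  from assms(3) obtain K0 where K0: "\<And>k. k \<ge> K0 \<Longrightarrow> L (exp (real k)) \<le> L (exp (real (Suc k)))"
    unfolding eventually_sequentially by blast
  have Lmono: "L (exp (real k)) \<le> L (exp (real k'))" if "K0 \<le> k" "k \<le> k'" for k k'
    using that(2)
  proof (induction k' rule: dec_induct)
    case base then show ?case by simp
  next
    case (step q)
    then show ?case using K0[of q] that(1) by linarith
  qed
  define N0 where "N0 = max K0 2"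
  have hmono: "h a \<le> h b" if "N0 \<le> a" "a \<le> b" for a b
  proof -
    have "L (exp (real (2*a))) \<le> L (exp (real (2*b)))"
      by (rule Lmono) (use that in \<open>auto simp: N0_def\<close>)
    then have "L (exp (2 * real a)) \<le> L (exp (2 * real b))" by simp
    then have "ln (L (exp (2 * real a))) \<le> ln (L (exp (2 * real b)))"
      using Lpos by simp
    then show ?thesis unfolding h_def using assms(1) by (simp add: divide_right_mono)
  qed
  have exist: "\<exists>n\<ge>M+1. P y n" if M: "M \<ge> N0" and y: "y \<ge> real M + h M" for M y
  proof (rule ccontr)
    assume nex: "\<not> ?thesis"
    have ind: "real (M+1+k) - 1 + h (M+k) \<le> y" for k
    proof (induction k)
      case 0 then show ?case using y by simp
    next
      case (Suc k)
      have "2 \<le> M+1+k" using M by (simp add: N0_def)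
      moreover have "\<not> P y (M+1+k)" using nex by auto
      ultimately have "real (M+1+k) + h (M+1+k) \<le> y" using Suc by (simp add: P_def)
      then show ?case by simp
    qed
    define k where "k = nat (ceiling (y - h M - M)) + 1"
    have "real k > y - h M - M" unfolding k_def by linarith
    moreover have "h M \<le> h (M+k)" by (rule hmono) (use M in auto)
    ultimately have "real (M+1+k) - 1 + h (M+k) > y" by simp
    with ind[of k] show False by simp
  qed
  have uniq: "n = m" if "M \<ge> N0" "P y n" "P y m" "n \<ge> M+1" "m \<ge> M+1" for M y n m
  proof -
    have "\<not> n < m" if "N0 \<le> n" "P y n" "P y m" "n < m" for n m
    proof
      have "h n \<le> h (m-1)" by (rule hmono) (use that in auto)
      moreover have "real n \<le> real m - 1" using that(4) by simp
      moreover have "real m - 1 + h (m-1) \<le> y" "y < real n + h n" using that by (auto simp: P_def)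
      ultimately show False by linarith
    qed
    then show ?thesis using that by (metis le_trans linorder_neqE_nat le_add1 add_leE)
  qed
  define B where "B = (\<lambda>M. Max ((\<lambda>n. real n + h n) ` {..M}))"
  have small: "n \<ge> M+1" if "P y n" "y \<ge> B M" for M y n
  proof (rule ccontr)
    assume "\<not> n \<ge> M+1"
    then have "n \<in> {..M}" by simp
    then have "real n + h n \<le> B M" unfolding B_def by (intro Max_ge) auto
    with that show False by (auto simp: P_def)
  qed
  define Y where "Y = (\<lambda>M. max (B M) (real M + h M))"
  have good: "\<exists>n. n \<ge> M+1 \<and> P y n \<and> gstar \<beta> L y = h (n-1)" if MY: "M \<ge> N0" "y \<ge> Y M" for M y
  proof -
    obtain n where n: "n \<ge> M+1" "P y n" using exist[of M y] MY by (auto simp: Y_def)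
    have "gstar \<beta> L y = h (n-1)"
    proof (rule gstar_eq[OF n(2)])
      fix m assume "P y m"
      moreover then have "m \<ge> M+1" using small[of y m M] MY by (auto simp: Y_def)
      ultimately show "m = n" using uniq[of M y m n] n MY by auto
    qed
    then show ?thesis using n by blast
  qed
  define c where "c = ln A"
  define K where "K = nat (ceiling \<bar>c\<bar>) + 1"
  have Kc: "real K \<ge> \<bar>c\<bar> + 1" unfolding K_def by linarith
  have gap: "m < n + K \<and> n < m + K" if "P y n" "P (y + c) m" "n \<ge> N0" "m \<ge> N0" for y n m
  proof
    show "m < n + K"
    proof (cases "m \<ge> n + 1")
      case True
      have "h n \<le> h (m-1)" by (rule hmono) (use that True in auto)
      moreover have "real m - 1 + h (m-1) \<le> y + c" "y < real n + h n" using that by (auto simp: P_def)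
      ultimately have "real m < real n + real K" using Kc True by (simp add: of_nat_diff)
      then show ?thesis by linarith
    qed (simp add: K_def)
  next
    show "n < m + K"
    proof (cases "n \<ge> m + 1")
      case True
      have "h m \<le> h (n-1)" by (rule hmono) (use that True in auto)
      moreover have "real n - 1 + h (n-1) \<le> y" "y + c < real m + h m" using that by (auto simp: P_def)
      ultimately have "real n < real m + real K" using Kc True by (simp add: of_nat_diff)
      then show ?thesis by linarith
    qed (simp add: K_def)
  qed
  have Dlim: "(\<lambda>k. h (Suc k) - h k) \<longlonglongrightarrow> 0"
  proof -
    have f: "filterlim (\<lambda>k::nat. exp (2 * real k)) at_top sequentially"
      by (rule filterlim_compose[OF exp_at_top filterlim_tendsto_pos_mult_at_top[OF tendsto_const _ filterlim_real_sequentially]]) simp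
    have "(\<lambda>k. L (exp 2 * exp (2 * real k)) / L (exp (2 * real k))) \<longlonglongrightarrow> 1"
      using filterlim_compose[OF sv[of "exp 2"] f] by simp
    then have "(\<lambda>k. ln (L (exp 2 * exp (2 * real k)) / L (exp (2 * real k))) / (2 * \<beta>)) \<longlonglongrightarrow> ln 1 / (2*\<beta>)"
      by (intro tendsto_divide tendsto_ln tendsto_const) (use assms(1) in auto)
    moreover have "ln (L (exp 2 * exp (2 * real k)) / L (exp (2 * real k))) / (2 * \<beta>) = h (Suc k) - h k" for k
    proof -
      have "exp (2 * real (Suc k)) = exp 2 * exp (2 * real k)"
        by (simp add: exp_add[symmetric] algebra_simps)
      then show ?thesis unfolding h_def
        using Lpos[of "exp 2 * exp (2 * real k)"] Lpos[of "exp (2 * real k)"]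
        by (simp add: ln_div diff_divide_distrib)
    qed
    ultimately show ?thesis by simp
  qed
  have Jlim: "(\<lambda>k. h (k + j) - h k) \<longlonglongrightarrow> 0" for j
  proof (induction j)
    case 0 then show ?case by simp
  next
    case (Suc j)
    have "(\<lambda>k. h (Suc (k + j)) - h (k + j)) \<longlonglongrightarrow> 0"
      using LIMSEQ_ignore_initial_segment[OF Dlim, of j] by simp
    from tendsto_add[OF this Suc] show ?case by simp
  qed
  show ?thesis
  proof (rule tendstoI)
    fix e :: real assume e: "e > 0"
    have "\<forall>\<^sub>F k in sequentially. \<forall>j\<in>{..K}. \<bar>h (k + j) - h k\<bar> < e"
    proof (rule eventually_ball_finite)
      show "\<forall>j\<in>{..K}. \<forall>\<^sub>F k in sequentially. \<bar>h (k + j) - h k\<bar> < e"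
        using tendstoD[OF Jlim e] by (simp add: dist_real_def)
    qed (simp add: K_def)
    then obtain M1 where M1: "\<And>k j. k \<ge> M1 \<Longrightarrow> j \<le> K \<Longrightarrow> \<bar>h (k + j) - h k\<bar> < e"
      unfolding eventually_sequentially by auto
    define M where "M = max N0 M1"
    have MN: "M \<ge> N0" unfolding M_def by simp
    have "\<forall>\<^sub>F x in at_top. x \<ge> max 1 (max (exp (Y M)) (exp (Y M - c)))"
      by (rule eventually_ge_at_top)
    then show "\<forall>\<^sub>F x in at_top. dist (gstar \<beta> L (ln (A * x)) - gstar \<beta> L (ln x)) 0 < e"
    proof (rule eventually_mono)
      fix x :: real assume x: "x \<ge> max 1 (max (exp (Y M)) (exp (Y M - c)))"
      then have xp: "x > 0" by simp
      have "exp (Y M) \<le> x" using x by simp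
      then have y1: "ln x \<ge> Y M" using xp by (simp add: ln_ge_iff)
      have "exp (Y M - c) \<le> x" using x by simp
      then have "ln x \<ge> Y M - c" using xp by (simp add: ln_ge_iff)
      moreover have lA: "ln (A * x) = ln x + c" using xp assms(4) by (simp add: c_def ln_mult)
      ultimately have y2: "ln x + c \<ge> Y M" by simp
      obtain n where n: "n \<ge> M+1" "P (ln x) n" "gstar \<beta> L (ln x) = h (n-1)"
        using good[OF MN y1] by blast
      obtain m where m: "m \<ge> M+1" "P (ln x + c) m" "gstar \<beta> L (ln x + c) = h (m-1)"
        using good[OF MN y2] by blast
      have g: "m < n + K \<and> n < m + K" by (rule gap[OF n(2) m(2)]) (use n m MN in auto)
      have "\<bar>h (m-1) - h (n-1)\<bar> < e"
      proof (cases "m \<le> n")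
        case True
        have "\<bar>h (m - 1 + (n - m)) - h (m-1)\<bar> < e"
          by (rule M1) (use m g True in \<open>auto simp: M_def\<close>)
        moreover have "m - 1 + (n - m) = n - 1" using True m by simp
        ultimately show ?thesis by simp
      next
        case False
        have "\<bar>h (n - 1 + (m - n)) - h (n-1)\<bar> < e"
          by (rule M1) (use n g False in \<open>auto simp: M_def\<close>)
        moreover have "n - 1 + (m - n) = m - 1" using False n by simp
        ultimately show ?thesis by simp
      qed
      then show "dist (gstar \<beta> L (ln (A * x)) - gstar \<beta> L (ln x)) 0 < e"
        using n(3) m(3) lA by (simp add: dist_real_def)
    qed
  qed
qed

end
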